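(* Let $q=2^h$ with $h\equiv 1\pmod 2$, let $$U=\left\{\left(x,y,x^q+y^{q^2},x^{q^2}+y^q+y^{q^2}\right): x,y\in\mathbb F_{q^4}\right\}\subseteq\mathbb F_{q^4}^4,$$ and let $\mathcal C$ be an $[8,4]_{q^4/q}$ code associated to $U$. Then the dual code $\mathcal C^\perp$ is equivalent to $\mathcal C$.
   Context: A code associated to $U$ is the $\mathbb F_{q^4}$-row space of the $4\times 8$ matrix whose columns are an $\mathbb F_q$-basis of $U$. The dual code is $\mathcal C^\perp=\{u\in\mathbb F_{q^4}^8: uv^\top=0\ \forall v\in\mathcal C\}$. Two codes $\mathcal C_1,\mathcal C_2\subseteq\mathbb F_{q^m}^n$ are (linearly) equivalent if $\mathcal C_2=\{vA: v\in\mathcal C_1\}$ for some $A\in\mathrm{GL}(n,q)$. *)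

theory Defs
  imports "HOL-Analysis.Analysis"
begin

definition subfield_q :: "nat \<Rightarrow> 'a::field set" where
  "subfield_q q = {x. x ^ q = x}"

definition U_set :: "nat \<Rightarrow> ('a::field ^ 4) set" where
  "U_set q = {vector [x, y, x ^ q + y ^ (q^2), x ^ (q^2) + y ^ q + y ^ (q^2)] | x y. True}"

definition is_Fq_basis :: "nat \<Rightarrow> ('n::finite \<Rightarrow> 'a::field ^ 'm) \<Rightarrow> ('a ^ 'm) set \<Rightarrow> bool" where
  "is_Fq_basis q b S \<longleftrightarrow>
     (\<forall>c. (\<forall>i. c i \<in> subfield_q q) \<and> (\<Sum>i\<in>UNIV. c i *s b i) = 0 \<longrightarrow> (\<forall>i. c i = 0)) \<and>
     S = {(\<Sum>i\<in>UNIV. c i *s b i) | c. \<forall>i. c i \<in> subfield_q q}"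

text \<open>Code associated: F_{q^m}-row space of the matrix whose j-th column is b j.\<close>
definition assoc_code :: "('n::finite \<Rightarrow> 'a::field ^ 'm::finite) \<Rightarrow> ('a ^ 'n) set" where
  "assoc_code b = {(\<chi> j. \<Sum>k\<in>UNIV. u $ k * (b j) $ k) | u. True}"

definition dual_code :: "('a::field ^ 'n::finite) set \<Rightarrow> ('a ^ 'n) set" where
  "dual_code C = {u. \<forall>v\<in>C. (\<Sum>i\<in>UNIV. u $ i * v $ i) = 0}"

definition row_mult :: "'a::field ^ 'n::finite \<Rightarrow> 'a ^ 'n ^ 'n \<Rightarrow> 'a ^ 'n" where
  "row_mult v A = (\<chi> j. \<Sum>i\<in>UNIV. v $ i * A $ i $ j)"

definition codes_equiv :: "nat \<Rightarrow> ('a::field ^ 'n::finite) set \<Rightarrow> ('a ^ 'n) set \<Rightarrow> bool" where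
  "codes_equiv q C1 C2 \<longleftrightarrow>
     (\<exists>A B :: 'a ^ 'n ^ 'n. (\<forall>i j. A $ i $ j \<in> subfield_q q) \<and> (\<forall>i j. B $ i $ j \<in> subfield_q q) \<and>
        A ** B = mat 1 \<and> B ** A = mat 1 \<and> C2 = (\<lambda>v. row_mult v A) ` C1)"

end

theory Submission imports Defs "HOL-Computational_Algebra.Polynomial" begin


lemma card_zero_field: "of_nat CARD('a::{field,finite}) = (0::'a)"
proof -
  have b: "bij_betw (\<lambda>x::'a. x + 1) UNIV UNIV"
    by (rule bij_betwI[where g="\<lambda>x. x - 1"]) auto
  have "(\<Sum>x\<in>UNIV. x + 1) = (\<Sum>x\<in>(UNIV::'a set). x)"
    using sum.reindex_bij_betw[OF b, of id] by simp
  moreover have "(\<Sum>x\<in>UNIV. x + 1) = (\<Sum>x\<in>(UNIV::'a set). x) + of_nat CARD('a)"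
    by (simp add: sum.distrib)
  ultimately show ?thesis by simp
qed

lemma char2_field:
  assumes "CARD('a::{field,finite}) = 2^n" "n > 0"
  shows "(1::'a) + 1 = 0"
proof -
  have "(2::'a)^n = 0" using card_zero_field[where 'a='a] assms(1) by simp
  hence "(2::'a) = 0" by simp
  thus ?thesis by simp
qed

lemma pow_card_field: "(x::'a::{field,finite}) ^ CARD('a) = x"
proof (cases "x = 0")
  case True thus ?thesis by simp
next
  case False
  let ?N = "UNIV - {0::'a}"
  have b: "bij_betw (\<lambda>y. x * y) ?N ?N"
    by (rule bij_betwI[where g="\<lambda>y. y / x"]) (use False in auto)
  have "(\<Prod>y\<in>?N. x * y) = (\<Prod>y\<in>?N. y)"
    using prod.reindex_bij_betw[OF b, of id] by simp
  moreover have "(\<Prod>y\<in>?N. x * y) = x ^ card ?N * (\<Prod>y\<in>?N. y)"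
    by (simp add: prod.distrib)
  moreover have "(\<Prod>y\<in>?N. y) \<noteq> 0" by simp
  ultimately have "x ^ card ?N = 1" by simp
  moreover have "card ?N = CARD('a) - 1" by (simp add: card_Diff_singleton)
  moreover have "CARD('a) > 0" by simp
  ultimately show ?thesis
    by (metis One_nat_def Suc_pred mult.right_neutral power_Suc)
qed

definition fr :: "nat \<Rightarrow> nat \<Rightarrow> 'a::field \<Rightarrow> 'a" where
  "fr q k x = x ^ (q ^ k)"

lemma pow2_add:
  assumes "(1::'a::field) + 1 = 0"
  shows "((x::'a) + y) ^ (2^n) = x ^ (2^n) + y ^ (2^n)"
proof (induction n)
  case 0 then show ?case by simp
next
  case (Suc n)
  have "(x + y) ^ (2 ^ Suc n) = ((x+y)^(2^n))^2" by (simp add: power_mult[symmetric] mult.commute)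
  also have "\<dots> = (x^(2^n) + y^(2^n))^2" using Suc by simp
  also have "\<dots> = (x^(2^n))^2 + (y^(2^n))^2 + (1+1) * x^(2^n) * y^(2^n)"
    by (simp add: power2_eq_square algebra_simps)
  also have "\<dots> = (x^(2^n))^2 + (y^(2^n))^2"
    using assms by simp
  also have "\<dots> = x ^ (2 ^ Suc n) + y ^ (2 ^ Suc n)"
    by (simp only: power_Suc2 power_mult)
  finally show ?case .
qed


lemma fr_add:
  assumes c2: "(1::'a::field) + 1 = 0" and q: "q = 2^h"
  shows "fr q k ((x::'a) + y) = fr q k x + fr q k y"
proof -
  have "q ^ k = 2 ^ (h * k)" using q by (simp add: power_mult)
  thus ?thesis unfolding fr_def using pow2_add[OF c2] by simp
qed

lemma fr_mult: "fr q k ((x::'a::field) * y) = fr q k x * fr q k y"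
  unfolding fr_def by (simp add: power_mult_distrib)

lemma fr_zero: "q > 0 \<Longrightarrow> fr q k (0::'a::field) = 0"
  unfolding fr_def by simp

lemma fr_one: "fr q k (1::'a::field) = 1"
  unfolding fr_def by simp

lemma fr_fr: "fr q a (fr q b (x::'a::field)) = fr q (a+b) x"
  unfolding fr_def by (simp add: power_mult[symmetric] power_add mult.commute)

lemma fr_idx0: "fr q 0 (x::'a::field) = x"
  unfolding fr_def by simp

lemma fr_idx1: "fr q 1 (x::'a::field) = x ^ q"
  unfolding fr_def by simp

lemma fr_sum:
  assumes c2: "(1::'a::field) + 1 = 0" and q: "q = 2^h"
  shows "fr q k (sum (f::'b \<Rightarrow> 'a) S) = sum (\<lambda>i. fr q k (f i)) S"
proof (cases "finite S")
  have q0: "q > 0" using q by simp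
  case True thus ?thesis
    by (induction S rule: finite_induct) (simp_all add: fr_zero[OF q0] fr_add[OF c2 q])
next
  have q0: "q > 0" using q by simp
  case False thus ?thesis by (simp add: fr_zero[OF q0])
qed

lemma neg2: "(1::'a::field) + 1 = 0 \<Longrightarrow> - (x::'a) = x"
proof -
  assume "(1::'a::field) + 1 = 0"
  hence "x + x = 0" by (metis distrib_left mult.right_neutral mult_zero_right)
  thus ?thesis by (metis add_eq_0_iff)
qed

lemma double2: "(1::'a::field) + 1 = 0 \<Longrightarrow> (x::'a) + x = 0"
  by (metis distrib_left mult.right_neutral mult_zero_right)

lemma double2': "(1::'a::field) + 1 = 0 \<Longrightarrow> (x::'a) + (x + y) = y"
  by (metis add.assoc add_0 double2)

lemma fr_card: "CARD('a::{field,finite}) = q^4 \<Longrightarrow> fr q 4 (x::'a) = x"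
  unfolding fr_def using pow_card_field by metis

lemma fr_K: "c \<in> subfield_q q \<Longrightarrow> fr q k (c::'a::field) = c"
proof (induction k)
  case 0 then show ?case by (simp add: fr_idx0)
next
  case (Suc k)
  have "fr q (Suc k) c = fr q k (fr q 1 c)" using fr_fr[of q k 1 c] by simp
  also have "fr q 1 c = c" using Suc.prems by (simp add: subfield_q_def fr_def)
  finally show ?case using Suc by simp
qed

lemma fr_scal: "c \<in> subfield_q q \<Longrightarrow> fr q k ((c::'a::field) * x) = c * fr q k x"
  by (simp add: fr_mult fr_K)

definition s1 :: "nat \<Rightarrow> 'a::field \<Rightarrow> 'a" where "s1 q x = x ^ q"
definition s2 :: "nat \<Rightarrow> 'a::field \<Rightarrow> 'a" where "s2 q x = x ^ (q^2)"
definition s3 :: "nat \<Rightarrow> 'a::field \<Rightarrow> 'a" where "s3 q x = x ^ (q^3)"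

lemma s_fr: "s1 q x = fr q 1 x" "s2 q x = fr q 2 x" "s3 q x = fr q 3 x"
  unfolding s1_def s2_def s3_def fr_def by simp_all

lemma s_add:
  assumes c2: "(1::'a::field) + 1 = 0" and q: "q = 2^h"
  shows "s1 q ((x::'a) + y) = s1 q x + s1 q y" "s2 q ((x::'a) + y) = s2 q x + s2 q y"
    "s3 q ((x::'a) + y) = s3 q x + s3 q y"
  unfolding s_fr by (simp_all only: fr_add[OF c2 q])

lemma s_mult:
  shows "s1 q ((x::'a::field) * y) = s1 q x * s1 q y" "s2 q ((x::'a) * y) = s2 q x * s2 q y"
    "s3 q ((x::'a) * y) = s3 q x * s3 q y"
  unfolding s_fr by (simp_all only: fr_mult)

lemma s_sum:
  assumes c2: "(1::'a::field) + 1 = 0" and q: "q = 2^h"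
  shows "s1 q (sum (f::'b \<Rightarrow> 'a) S) = sum (\<lambda>i. s1 q (f i)) S"
    "s2 q (sum (f::'b \<Rightarrow> 'a) S) = sum (\<lambda>i. s2 q (f i)) S"
    "s3 q (sum (f::'b \<Rightarrow> 'a) S) = sum (\<lambda>i. s3 q (f i)) S"
  unfolding s_fr by (simp_all only: fr_sum[OF c2 q])

lemma s_K:
  assumes "c \<in> subfield_q q"
  shows "s1 q (c::'a::field) = c" "s2 q c = c" "s3 q c = c"
  unfolding s_fr using fr_K[OF assms] by simp_all

lemma s_scal:
  assumes "c \<in> subfield_q q"
  shows "s1 q ((c::'a::field) * x) = c * s1 q x" "s2 q (c * x) = c * s2 q x" "s3 q (c * x) = c * s3 q x"
  using s_K[OF assms] by (simp_all add: s_mult)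

lemma s_comp:
  assumes card: "CARD('a::{field,finite}) = q^4"
  shows "s1 q (s1 q (x::'a)) = s2 q x" "s1 q (s2 q x) = s3 q x" "s1 q (s3 q x) = x"
    "s2 q (s1 q (x::'a)) = s3 q x" "s2 q (s2 q x) = x" "s2 q (s3 q x) = s1 q x"
    "s3 q (s1 q (x::'a)) = x" "s3 q (s2 q x) = s1 q x" "s3 q (s3 q x) = s2 q x"
proof -
  have f4: "fr q 4 x = x" for x :: 'a using fr_card[OF card] .
  have ff: "fr q a (fr q b x) = fr q (a+b) x" for a b and x :: 'a by (rule fr_fr)
  have f5: "fr q 5 x = fr q 1 x" for x :: 'a using ff[of 1 4 x] f4 by simp
  have f6: "fr q 6 x = fr q 2 x" for x :: 'a using ff[of 2 4 x] f4 by simp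
  show "s1 q (s1 q (x::'a)) = s2 q x" "s1 q (s2 q x) = s3 q x" "s1 q (s3 q x) = x"
    "s2 q (s1 q (x::'a)) = s3 q x" "s2 q (s2 q x) = x" "s2 q (s3 q x) = s1 q x"
    "s3 q (s1 q (x::'a)) = x" "s3 q (s2 q x) = s1 q x" "s3 q (s3 q x) = s2 q x"
    unfolding s_fr
    using ff[of 1 1 x] ff[of 1 2 x] ff[of 1 3 x] ff[of 2 1 x] ff[of 2 2 x] ff[of 2 3 x]
      ff[of 3 1 x] ff[of 3 2 x] ff[of 3 3 x] f4[of x] f5[of x] f6[of x]
    by (simp_all add: numeral_eq_Suc)
qed

definition tr :: "nat \<Rightarrow> 'a::field \<Rightarrow> 'a" where
  "tr q x = x + s1 q x + s2 q x + s3 q x"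

lemma tr_K:
  assumes c2: "(1::'a::{field,finite}) + 1 = 0" and q: "q = 2^h" and card: "CARD('a) = q^4"
  shows "tr q (x::'a) \<in> subfield_q q"
proof -
  have "(tr q x)^q = s1 q (tr q x)" by (simp add: s1_def)
  also have "\<dots> = tr q x"
    unfolding tr_def by (simp add: s_add[OF c2 q] s_comp[OF card] algebra_simps)
  finally show ?thesis by (simp add: subfield_q_def)
qed

lemma tr_add:
  assumes c2: "(1::'a::field) + 1 = 0" and q: "q = 2^h"
  shows "tr q ((x::'a) + y) = tr q x + tr q y"
  unfolding tr_def by (simp add: s_add[OF c2 q] algebra_simps)

lemma tr_scal: "c \<in> subfield_q q \<Longrightarrow> tr q ((c::'a::field) * x) = c * tr q x"
  unfolding tr_def by (simp add: s_scal algebra_simps)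

lemma tr_sum:
  assumes c2: "(1::'a::field) + 1 = 0" and q: "q = 2^h"
  shows "tr q (sum (f::'b \<Rightarrow> 'a) S) = sum (\<lambda>i. tr q (f i)) S"
  unfolding tr_def by (simp add: s_sum[OF c2 q] sum.distrib)

lemma tr_nonzero:
  assumes q2: "q \<ge> 2" and card: "CARD('a::{field,finite}) = q^4"
  shows "\<exists>t::'a. tr q t \<noteq> 0"
proof (rule ccontr)
  assume "\<not> (\<exists>t::'a. tr q t \<noteq> 0)"
  hence z: "\<And>t::'a. tr q t = 0" by blast
  define p :: "'a poly" where "p = monom 1 1 + monom 1 q + monom 1 (q^2) + monom 1 (q^3)"
  have pe: "poly p x = tr q x" for x
    unfolding p_def tr_def s1_def s2_def s3_def by (simp add: poly_monom)
  have "1 < q" using q2 by simp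
  have "q < q^2" using q2 by (simp add: power2_eq_square)
  have "q^2 < q^3" using q2 by (simp add: power_strict_increasing)
  have dp: "degree p \<le> q^3"
  proof -
    have "degree p \<le> max (max (max (degree (monom (1::'a) 1)) (degree (monom (1::'a) q))) (degree (monom (1::'a) (q^2)))) (degree (monom (1::'a) (q^3)))"
      unfolding p_def by (meson degree_add_le max.cobounded1 max.cobounded2 order_trans)
    thus ?thesis using \<open>1 < q\<close> \<open>q < q^2\<close> \<open>q^2 < q^3\<close> by (simp add: degree_monom_eq)
  qed
  have "q^3 < q^4" using q2 by (simp add: power_strict_increasing)
  have "degree p < q^4" using dp \<open>q^3 < q^4\<close> by linarith
  have "p = 0"
    by (rule poly_eqI_degree[where A=UNIV]) (use pe z \<open>degree p < q^4\<close> card q2 in auto)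
  moreover have "coeff p 1 = 1"
    unfolding p_def using \<open>1 < q\<close> \<open>q < q^2\<close> \<open>q^2 < q^3\<close> by (simp add: coeff_monom)
  ultimately show False by simp
qed



lemma exhaust_8:
  fixes x :: 8
  shows "x = 0 \<or> x = 1 \<or> x = 2 \<or> x = 3 \<or> x = 4 \<or> x = 5 \<or> x = 6 \<or> x = 7"
proof (induct x)
  case (of_int z)
  then have "z = 0 \<or> z = 1 \<or> z = 2 \<or> z = 3 \<or> z = 4 \<or> z = 5 \<or> z = 6 \<or> z = 7" by fastforce
  then show ?case by auto
qed

lemma UNIV_8: "(UNIV::8 set) = {0,1,2,3,4,5,6,7}" using exhaust_8 by auto

lemma sum_8: "sum f (UNIV::8 set) = f 0 + f 1 + f 2 + f 3 + f 4 + f 5 + f 6 + f 7"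
  unfolding UNIV_8 by (simp add: ac_simps)

lemma vector4_nth:
  "(vector [a,b,c,d] :: 'a::zero^4) $ 1 = a" "(vector [a,b,c,d] :: 'a::zero^4) $ 2 = b"
  "(vector [a,b,c,d] :: 'a::zero^4) $ 3 = c" "(vector [a,b,c,d] :: 'a::zero^4) $ 4 = d"
  unfolding vector_def by simp_all

definition phi :: "nat \<Rightarrow> 'a::field \<Rightarrow> 'a \<Rightarrow> 'a^4" where
  "phi q X Y = vector [X, Y, X ^ q + Y ^ (q^2), X ^ (q^2) + Y ^ q + Y ^ (q^2)]"

lemma U_set_phi: "U_set q = {phi q X Y | X Y. True}"
  unfolding U_set_def phi_def by simp

lemma phi_comp:
  "phi q X Y $ 1 = X" "phi q X Y $ 2 = Y" "phi q X Y $ 3 = s1 q X + s2 q Y"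
  "phi q X Y $ 4 = s2 q X + s1 q Y + s2 q Y"
  unfolding phi_def s1_def s2_def by (simp_all add: vector4_nth)

lemma phi_eq: "phi q X Y = phi q X' Y' \<Longrightarrow> X = X' \<and> Y = Y'"
  by (metis phi_comp(1,2))

lemma phi_lin:
  assumes c2: "(1::'a::field) + 1 = 0" and q: "q = 2^h" and K: "\<forall>i\<in>S. c i \<in> subfield_q q"
  shows "(\<Sum>i\<in>S. c i *s phi q (X i) (Y i)) = phi q (\<Sum>i\<in>S. c i * X i) (\<Sum>i\<in>S. (c i::'a) * Y i)"
proof -
  have "(\<Sum>i\<in>S. c i *s phi q (X i) (Y i)) $ k = phi q (\<Sum>i\<in>S. c i * X i) (\<Sum>i\<in>S. c i * Y i) $ k" for k
  proof -
    have e: "(\<Sum>i\<in>S. c i *s phi q (X i) (Y i)) $ k = (\<Sum>i\<in>S. c i * (phi q (X i) (Y i) $ k))"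
      by (simp add: sum_component)
    have s1s: "(\<Sum>i\<in>S. c i * s1 q (Z i)) = s1 q (\<Sum>i\<in>S. c i * Z i)" for Z
      by (simp add: s_sum[OF c2 q] s_scal K)
    have s2s: "(\<Sum>i\<in>S. c i * s2 q (Z i)) = s2 q (\<Sum>i\<in>S. c i * Z i)" for Z
      by (simp add: s_sum[OF c2 q] s_scal K)
    show ?thesis unfolding e using exhaust_4[of k]
      by (auto simp add: phi_comp distrib_left sum.distrib s1s s2s)
  qed
  thus ?thesis by (simp add: vec_eq_iff)
qed

definition V :: "nat \<Rightarrow> 'a::field \<Rightarrow> 'a \<Rightarrow> 'a^8" where
  "V q X Y = (\<chi> s. if s = 0 then X else if s = 1 then s1 q X else if s = 2 then s2 q X
     else if s = 3 then s3 q X else if s = 4 then Y else if s = 5 then s1 q Y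
     else if s = 6 then s2 q Y else s3 q Y)"

lemma V_comp:
  "V q X Y $ 0 = X" "V q X Y $ 1 = s1 q X" "V q X Y $ 2 = s2 q X" "V q X Y $ 3 = s3 q X"
  "V q X Y $ 4 = Y" "V q X Y $ 5 = s1 q Y" "V q X Y $ 6 = s2 q Y" "V q X Y $ 7 = s3 q Y"
  unfolding V_def by simp_all

definition E :: "'a::field^8 \<Rightarrow> 'a^8 \<Rightarrow> 'a" where
  "E c v = (\<Sum>s\<in>UNIV. c $ s * v $ s)"

lemma dotV:
  assumes c2: "(1::'a::field) + 1 = 0" and q: "q = 2^h"
  shows "E (V q X Y) (V q X' Y') = tr q ((X::'a) * X' + Y * Y')"
  unfolding E_def sum_8 V_comp tr_def by (simp add: s_add[OF c2 q] s_mult algebra_simps)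



definition Lx :: "nat \<Rightarrow> 'a::field \<Rightarrow> 'a \<Rightarrow> 'a" where
  "Lx q X Y = s2 q X + s1 q Y + s3 q Y"
definition Ly :: "nat \<Rightarrow> 'a::field \<Rightarrow> 'a \<Rightarrow> 'a" where
  "Ly q X Y = s1 q X + s3 q X + s1 q Y + s2 q Y + s3 q Y"

lemma L_inv:
  assumes c2: "(1::'a::{field,finite}) + 1 = 0" and q: "q = 2^h" and card: "CARD('a) = q^4"
  shows "Lx q (Lx q X Y) (Ly q X Y) = (X::'a)" "Ly q (Lx q X Y) (Ly q X Y) = (Y::'a)"
  unfolding Lx_def Ly_def
  by (simp_all add: s_add[OF c2 q] s_comp[OF card] add_ac double2[OF c2] double2'[OF c2])

definition cc :: "4 \<Rightarrow> 'a::field^8" where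
  "cc k = (\<chi> s. if (k = 1 \<and> s = 0) \<or> (k = 2 \<and> s = 4) \<or> (k = 3 \<and> (s = 1 \<or> s = 6))
     \<or> (k = 4 \<and> (s = 2 \<or> s = 5 \<or> s = 6)) then 1 else 0)"

definition dd :: "4 \<Rightarrow> 'a::field^8" where
  "dd l = (\<chi> s. if (l = 1 \<and> (s = 2 \<or> s = 5 \<or> s = 7)) \<or> (l = 2 \<and> (s = 1 \<or> s = 3 \<or> s = 5 \<or> s = 6 \<or> s = 7))
     \<or> (l = 3 \<and> (s = 1 \<or> s = 5 \<or> s = 6 \<or> s = 7)) \<or> (l = 4 \<and> (s = 1 \<or> s = 2 \<or> s = 3 \<or> s = 6 \<or> s = 7))
     then 1 else 0)"

lemma b_comp: "phi q X Y $ k = E (cc k) (V q X Y)"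
  using exhaust_4[of k] unfolding E_def sum_8 cc_def
  by (auto simp: V_comp phi_comp)

lemma bb_comp:
  assumes c2: "(1::'a::{field,finite}) + 1 = 0" and q: "q = 2^h" and card: "CARD('a) = q^4"
  shows "phi q (Lx q X Y) (Ly q X Y) $ l = E (dd l) (V q (X::'a) Y)"
proof -
  have d1: "E (dd 1) (V q X Y) = s2 q X + s1 q Y + s3 q Y"
    unfolding E_def sum_8 dd_def by (simp add: V_comp)
  have d2: "E (dd 2) (V q X Y) = s1 q X + s3 q X + s1 q Y + s2 q Y + s3 q Y"
    unfolding E_def sum_8 dd_def by (simp add: V_comp add.assoc)
  have d3: "E (dd 3) (V q X Y) = s1 q X + s1 q Y + s2 q Y + s3 q Y"
    unfolding E_def sum_8 dd_def by (simp add: V_comp add.assoc)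
  have d4: "E (dd 4) (V q X Y) = s1 q X + s2 q X + s3 q X + s2 q Y + s3 q Y"
    unfolding E_def sum_8 dd_def by (simp add: V_comp add.assoc)
  have p1: "phi q (Lx q X Y) (Ly q X Y) $ 1 = E (dd 1) (V q X Y)"
    unfolding d1 phi_comp Lx_def ..
  have p2: "phi q (Lx q X Y) (Ly q X Y) $ 2 = E (dd 2) (V q X Y)"
    unfolding d2 phi_comp Ly_def ..
  have p3: "phi q (Lx q X Y) (Ly q X Y) $ 3 = E (dd 3) (V q X Y)"
    unfolding d3 phi_comp Lx_def Ly_def
    by (simp add: s_add[OF c2 q] s_comp[OF card] add_ac double2[OF c2] double2'[OF c2])
  have p4: "phi q (Lx q X Y) (Ly q X Y) $ 4 = E (dd 4) (V q X Y)"
    unfolding d4 phi_comp Lx_def Ly_def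
    by (simp add: s_add[OF c2 q] s_comp[OF card] add_ac double2[OF c2] double2'[OF c2])
  show ?thesis using exhaust_4[of l] p1 p2 p3 p4 by auto
qed

lemma cc_E:
  "E (cc 1) v = v$0" "E (cc 2) v = v$4" "E (cc 3) v = v$1 + v$6" "E (cc 4) v = v$2 + v$5 + v$6"
  unfolding E_def sum_8 cc_def by (simp_all add: add.assoc)

lemma dd_nth:
  "dd 1 $ 0 = 0" "dd 1 $ 1 = 0" "dd 1 $ 2 = 1" "dd 1 $ 4 = 0" "dd 1 $ 5 = 1" "dd 1 $ 6 = 0"
  "dd 2 $ 0 = 0" "dd 2 $ 1 = 1" "dd 2 $ 2 = 0" "dd 2 $ 4 = 0" "dd 2 $ 5 = 1" "dd 2 $ 6 = 1"
  "dd 3 $ 0 = 0" "dd 3 $ 1 = 1" "dd 3 $ 2 = 0" "dd 3 $ 4 = 0" "dd 3 $ 5 = 1" "dd 3 $ 6 = 1"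
  "dd 4 $ 0 = 0" "dd 4 $ 1 = 1" "dd 4 $ 2 = 1" "dd 4 $ 4 = 0" "dd 4 $ 5 = 0" "dd 4 $ 6 = 1"
  "dd 1 $ 3 = 0" "dd 2 $ 3 = 1" "dd 3 $ 3 = 0" "dd 4 $ 3 = 1"
  "dd 1 $ 7 = 1" "dd 2 $ 7 = 1" "dd 3 $ 7 = 1" "dd 4 $ 7 = 1"
  unfolding dd_def by simp_all

lemma orth:
  assumes c2: "(1::'a::field) + 1 = 0"
  shows "E (cc k) (dd l :: 'a^8) = 0"
  using exhaust_4[of k] exhaust_4[of l]
proof -
  have "(2::'a) = 0" using c2 by simp
  thus ?thesis using exhaust_4[of k] exhaust_4[of l]
    by (elim disjE) (simp_all add: cc_E dd_nth)
qed

lemma solve: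
  assumes c2: "(1::'a::field) + 1 = 0" and m: "\<And>k. E (cc k) (m::'a^8) = 0"
  shows "(\<Sum>l\<in>UNIV. (vector [m$6 + m$7, m$3 + m$5 + m$7, m$3 + m$6, m$5 + m$7] :: 'a^4) $ l * dd l $ s) = m $ s"
proof -
  have e1: "m$0 = 0" using m[of 1] unfolding E_def sum_8 cc_def by simp
  have e2: "m$4 = 0" using m[of 2] unfolding E_def sum_8 cc_def by simp
  have e3: "m$1 = m$6" using m[of 3] unfolding E_def sum_8 cc_def
    by (simp add: add_eq_0_iff neg2[OF c2])
  have e4: "m$2 = m$5 + m$6" using m[of 4] unfolding E_def sum_8 cc_def
    by (simp add: add_eq_0_iff neg2[OF c2] add.assoc)
  have "(2::'a) = 0" using c2 by simp
  have S: "(\<Sum>l\<in>UNIV. (vector [a,b,c,d] :: 'a^4) $ l * dd l $ s) = a * dd 1 $ s + b * dd 2 $ s + c * dd 3 $ s + d * dd 4 $ s" for a b c d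
    unfolding sum_4 vector4_nth ..
  show ?thesis unfolding S using exhaust_8[of s]
    by (elim disjE) (simp_all add: dd_nth e1 e2 e3 e4 add_ac double2[OF c2] double2'[OF c2])
qed


lemma Lx_lin:
  assumes c2: "(1::'a::field) + 1 = 0" and q: "q = 2^h" and K: "\<forall>i\<in>S. c i \<in> subfield_q q"
  shows "Lx q (\<Sum>i\<in>S. c i * X i) (\<Sum>i\<in>S. c i * Y i) = (\<Sum>i\<in>S. (c i::'a) * Lx q (X i) (Y i))"
  unfolding Lx_def by (simp add: s_sum[OF c2 q] s_scal K sum.distrib distrib_left)

lemma Ly_lin:
  assumes c2: "(1::'a::field) + 1 = 0" and q: "q = 2^h" and K: "\<forall>i\<in>S. c i \<in> subfield_q q"
  shows "Ly q (\<Sum>i\<in>S. c i * X i) (\<Sum>i\<in>S. c i * Y i) = (\<Sum>i\<in>S. (c i::'a) * Ly q (X i) (Y i))"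
  unfolding Ly_def by (simp add: s_sum[OF c2 q] s_scal K sum.distrib distrib_left)

lemma phi_zero: "q > 0 \<Longrightarrow> phi q 0 0 = (0::'a::field^4)"
proof -
  assume q0: "q > 0"
  have "phi q 0 0 $ k = (0::'a)" for k using exhaust_4[of k] q0 by (auto simp: phi_comp s1_def s2_def power_0_left)
  thus ?thesis by (simp add: vec_eq_iff)
qed

lemma E_e0: "E (\<chi> s. if s = 0 then 1 else 0) v = v $ 0"
  unfolding E_def sum_8 by simp

lemma E_e4: "E (\<chi> s. if s = 4 then 1 else 0) v = v $ 4"
  unfolding E_def sum_8 by simp



theorem proposition4p14:
  fixes b :: "8 \<Rightarrow> 'a::{field,finite} ^ 4"
    and q h :: nat
  assumes "q = 2 ^ h" and "odd h"
    and "CARD('a) = q ^ 4"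
    and "is_Fq_basis q b (U_set q)"
  shows "codes_equiv q (assoc_code b) (dual_code (assoc_code b))"
proof -
  note hq = assms(1) and card = assms(3) and bas = assms(4)
  have h0: "h > 0" using assms(2) by (cases h) auto
  have q2: "q \<ge> 2" using hq h0 power_increasing[of 1 h "2::nat"] by simp
  have q0: "q > 0" using q2 by simp
  have c2: "(1::'a) + 1 = 0"
    by (rule char2_field[of "h*4"]) (use card hq h0 in \<open>simp_all add: power_mult\<close>)
  define K :: "'a set" where "K = subfield_q q"
  have Kq: "c \<in> K \<longleftrightarrow> s1 q c = c" for c unfolding K_def subfield_q_def s1_def by simp
  have K0: "0 \<in> K" unfolding Kq s1_def using q0 by simp
  have K1: "1 \<in> K" unfolding Kq s1_def by simp
  have Kadd: "a \<in> K \<Longrightarrow> c \<in> K \<Longrightarrow> a + c \<in> K" for a c unfolding Kq by (simp add: s_add[OF c2 hq])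
  have Kmul: "a \<in> K \<Longrightarrow> c \<in> K \<Longrightarrow> a * c \<in> K" for a c unfolding Kq by (simp add: s_mult)
  have Kdiff: "a \<in> K \<Longrightarrow> c \<in> K \<Longrightarrow> a - c \<in> K" for a c
    using Kadd[of a c] neg2[OF c2, of c] by (metis diff_conv_add_uminus)
  have Ksum: "(\<And>i. i \<in> S \<Longrightarrow> f i \<in> K) \<Longrightarrow> sum f S \<in> K" for f :: "'b \<Rightarrow> 'a" and S
    unfolding Kq by (simp add: s_sum[OF c2 hq])
  have trK: "tr q t \<in> K" for t unfolding K_def by (rule tr_K[OF c2 hq card])

  have indep: "\<And>c. (\<forall>i. c i \<in> K) \<Longrightarrow> (\<Sum>i\<in>UNIV. c i *s b i) = 0 \<Longrightarrow> (\<forall>i. c i = 0)"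
    using bas unfolding is_Fq_basis_def K_def by blast
  have spanU: "U_set q = {(\<Sum>i\<in>UNIV. c i *s b i) | c. \<forall>i. c i \<in> K}"
    using bas unfolding is_Fq_basis_def K_def by (rule conjunct2)

  have bU: "b j \<in> U_set q" for j
  proof -
    have "(\<Sum>i\<in>UNIV. (if i = j then 1 else 0) *s b i) = b j"
      by (simp add: if_distrib[of "\<lambda>c. c *s _"] cong: if_cong)
    moreover have "\<forall>i. (if i = j then 1 else (0::'a)) \<in> K" using K0 K1 by simp
    ultimately show ?thesis unfolding spanU
      by (intro CollectI exI[where x="\<lambda>i. if i = j then 1 else 0"]) simp
  qed
  have "\<forall>j. \<exists>p. b j = phi q (fst p) (snd p)"
    using bU unfolding U_set_phi by force
  from choice[OF this] obtain f where f: "\<forall>j. b j = phi q (fst (f j)) (snd (f j))" by blast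
  define x where "x j = fst (f j)" for j
  define y where "y j = snd (f j)" for j
  have bxy: "b j = phi q (x j) (y j)" for j using f x_def y_def by simp

  have philin: "(\<forall>i. c i \<in> K) \<Longrightarrow> (\<Sum>i\<in>UNIV. c i *s phi q (X i) (Y i)) = phi q (\<Sum>i\<in>UNIV. c i * X i) (\<Sum>i\<in>UNIV. c i * Y i)"
    for c X Y using phi_lin[OF c2 hq, of UNIV c X Y] unfolding K_def by simp

  have span_z: "\<exists>c. (\<forall>i. c i \<in> K) \<and> X = (\<Sum>i\<in>UNIV. c i * x i) \<and> Y = (\<Sum>i\<in>UNIV. c i * y i)" for X Y
  proof -
    have "phi q X Y \<in> U_set q" unfolding U_set_phi by blast
    then obtain c where c: "\<forall>i. c i \<in> K" "phi q X Y = (\<Sum>i\<in>UNIV. c i *s b i)" unfolding spanU by blast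
    hence "phi q X Y = phi q (\<Sum>i\<in>UNIV. c i * x i) (\<Sum>i\<in>UNIV. c i * y i)"
      using philin[of c x y] bxy by simp
    thus ?thesis using c(1) phi_eq by blast
  qed
  have indep_z: "(\<forall>i. c i \<in> K) \<Longrightarrow> (\<Sum>i\<in>UNIV. c i * x i) = 0 \<Longrightarrow> (\<Sum>i\<in>UNIV. c i * y i) = 0 \<Longrightarrow> c i = 0" for c i
  proof -
    assume c: "\<forall>i. c i \<in> K" "(\<Sum>i\<in>UNIV. c i * x i) = 0" "(\<Sum>i\<in>UNIV. c i * y i) = 0"
    have "(\<Sum>i\<in>UNIV. c i *s b i) = 0" using philin[of c x y] c bxy phi_zero[OF q0] by simp
    thus "c i = 0" using indep c(1) by blast
  qed

  obtain t0 :: 'a where t0: "tr q t0 \<noteq> 0" using tr_nonzero[OF q2 card] by blast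
  have trsumK: "(\<forall>i. c i \<in> K) \<Longrightarrow> tr q (\<Sum>i\<in>UNIV. c i * g i) = (\<Sum>i\<in>UNIV. c i * tr q (g i))" for c g
    unfolding tr_sum[OF c2 hq] K_def by (simp add: tr_scal)

  have nondeg: "X0 = 0 \<and> Y0 = 0" if z: "\<And>i. tr q (x i * X0 + y i * Y0) = 0" for X0 Y0
  proof -
    have all: "tr q (X' * X0 + Y' * Y0) = 0" for X' Y'
    proof -
      obtain c where c: "\<forall>i. c i \<in> K" "X' = (\<Sum>i\<in>UNIV. c i * x i)" "Y' = (\<Sum>i\<in>UNIV. c i * y i)"
        using span_z by blast
      have "X' * X0 + Y' * Y0 = (\<Sum>i\<in>UNIV. c i * (x i * X0 + y i * Y0))"
        unfolding c(2,3) by (simp add: sum_distrib_right sum.distrib sum_distrib_left algebra_simps)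
      thus ?thesis using trsumK[OF c(1)] z by simp
    qed
    have "X0 = 0"
    proof (rule ccontr)
      assume "X0 \<noteq> 0"
      hence "tr q ((t0 / X0) * X0 + 0 * Y0) = tr q t0" by simp
      thus False using all t0 by metis
    qed
    moreover have "Y0 = 0"
    proof (rule ccontr)
      assume "Y0 \<noteq> 0"
      hence "tr q (0 * X0 + (t0 / Y0) * Y0) = tr q t0" by simp
      thus False using all t0 by metis
    qed
    ultimately show ?thesis ..
  qed

  define KS :: "(8 \<Rightarrow> 'a) set" where "KS = {c. \<forall>i. c i \<in> K}"
  define G :: "(8 \<Rightarrow> 'a) \<Rightarrow> (8 \<Rightarrow> 'a)" where
    "G c = (\<lambda>i. tr q (x i * (\<Sum>k\<in>UNIV. c k * x k) + y i * (\<Sum>k\<in>UNIV. c k * y k)))" for c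
  have GKS: "G ` KS \<subseteq> KS" unfolding KS_def G_def using trK by auto
  have Ginj: "inj_on G KS"
  proof (rule inj_onI)
    fix c d assume c: "c \<in> KS" and d: "d \<in> KS" and eq: "G c = G d"
    define e where "e k = c k - d k" for k
    have eK: "\<forall>k. e k \<in> K" using c d Kdiff unfolding KS_def e_def by blast
    have "tr q (x i * (\<Sum>k\<in>UNIV. e k * x k) + y i * (\<Sum>k\<in>UNIV. e k * y k)) = 0" for i
    proof -
      have "tr q (x i * (\<Sum>k\<in>UNIV. e k * x k) + y i * (\<Sum>k\<in>UNIV. e k * y k))
        = tr q ((x i * (\<Sum>k\<in>UNIV. c k * x k) + y i * (\<Sum>k\<in>UNIV. c k * y k))
           - (x i * (\<Sum>k\<in>UNIV. d k * x k) + y i * (\<Sum>k\<in>UNIV. d k * y k)))"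
        unfolding e_def by (simp add: left_diff_distrib sum_subtractf algebra_simps)
      also have "\<dots> = G c i - G d i"
        unfolding G_def diff_conv_add_uminus neg2[OF c2] by (simp add: tr_add[OF c2 hq])
      finally show ?thesis using eq by simp
    qed
    hence "(\<Sum>k\<in>UNIV. e k * x k) = 0 \<and> (\<Sum>k\<in>UNIV. e k * y k) = 0" by (rule nondeg)
    hence "e k = 0" for k using indep_z[OF eK] by blast
    thus "c = d" unfolding e_def by (simp add: fun_eq_iff)
  qed
  have Gsurj: "G ` KS = KS" by (rule endo_inj_surj[OF _ GKS Ginj]) simp
  have "\<forall>j. \<exists>c. c \<in> KS \<and> G c = (\<lambda>i. if i = j then 1 else 0)"
  proof
    fix j
    have "(\<lambda>i. if i = j then 1 else (0::'a)) \<in> KS" unfolding KS_def using K0 K1 by simp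
    thus "\<exists>c. c \<in> KS \<and> G c = (\<lambda>i. if i = j then 1 else 0)" using Gsurj by (metis imageE)
  qed
  from choice[OF this] obtain cs where cs: "\<And>j. cs j \<in> KS" "\<And>j. G (cs j) = (\<lambda>i. if i = j then 1 else 0)"
    by blast
  define xs where "xs j = (\<Sum>k\<in>UNIV. cs j k * x k)" for j
  define ys where "ys j = (\<Sum>k\<in>UNIV. cs j k * y k)" for j
  have dual: "tr q (x i * xs j + y i * ys j) = (if i = j then 1 else 0)" for i j
    using cs(2)[of j] unfolding G_def xs_def ys_def by (metis (mono_tags))

  define Vz where "Vz j = V q (x j) (y j)" for j
  define Vs where "Vs j = V q (xs j) (ys j)" for j
  have dot1: "E (Vs i) (Vz j) = (if i = j then 1 else 0)" for i j
  proof -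
    have "E (Vs i) (Vz j) = tr q (x j * xs i + y j * ys i)"
      unfolding Vs_def Vz_def dotV[OF c2 hq] by (simp add: mult.commute)
    thus ?thesis using dual[of j i] by auto
  qed
  define Xm :: "'a^8^8" where "Xm = (\<chi> s j. Vz j $ s)"
  define Ym :: "'a^8^8" where "Ym = (\<chi> s j. Vs j $ s)"
  have "transpose Ym ** Xm = mat 1"
    unfolding vec_eq_iff
    by (simp add: Xm_def Ym_def matrix_matrix_mult_def transpose_def mat_def E_def[symmetric] dot1)
  hence "Xm ** transpose Ym = mat 1" using matrix_left_right_inverse by blast
  hence key0: "(\<Sum>j\<in>UNIV. Vz j $ s * Vs j $ t) = (if s = t then 1 else 0)" for s t
    unfolding vec_eq_iff
    by (simp add: Xm_def Ym_def matrix_matrix_mult_def transpose_def mat_def)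
  have key: "(\<Sum>j\<in>UNIV. E c (Vz j) * E d (Vs j)) = E c d" for c d
  proof -
    have "(\<Sum>j\<in>UNIV. E c (Vz j) * E d (Vs j))
       = (\<Sum>j\<in>UNIV. \<Sum>s\<in>UNIV. \<Sum>t\<in>UNIV. c$s * d$t * (Vz j $ s * Vs j $ t))"
      unfolding E_def sum_product by (simp add: algebra_simps)
    also have "\<dots> = (\<Sum>s\<in>UNIV. \<Sum>j\<in>UNIV. \<Sum>t\<in>UNIV. c$s * d$t * (Vz j $ s * Vs j $ t))"
      by (rule sum.swap)
    also have "\<dots> = (\<Sum>s\<in>UNIV. \<Sum>t\<in>UNIV. \<Sum>j\<in>UNIV. c$s * d$t * (Vz j $ s * Vs j $ t))"
      by (rule sum.cong[OF refl], rule sum.swap)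
    also have "\<dots> = (\<Sum>s\<in>UNIV. \<Sum>t\<in>UNIV. c$s * d$t * (\<Sum>j\<in>UNIV. Vz j $ s * Vs j $ t))"
      by (simp only: sum_distrib_left)
    also have "\<dots> = E c d" unfolding key0 E_def by (simp add: if_distrib cong: if_cong)
    finally show ?thesis .
  qed

  define bb where "bb j = phi q (Lx q (xs j) (ys j)) (Ly q (xs j) (ys j))" for j
  have bbE: "bb j $ l = E (dd l) (Vs j)" for j l
    unfolding bb_def Vs_def by (rule bb_comp[OF c2 hq card])
  have bE: "b j $ k = E (cc k) (Vz j)" for j k
    unfolding bxy Vz_def by (rule b_comp)
  have orthsum: "(\<Sum>j\<in>UNIV. bb j $ l * b j $ k) = 0" for l k
  proof -
    have "(\<Sum>j\<in>UNIV. bb j $ l * b j $ k) = (\<Sum>j\<in>UNIV. E (cc k) (Vz j) * E (dd l) (Vs j))"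
      unfolding bbE bE by (simp add: mult.commute)
    also have "\<dots> = 0" unfolding key by (rule orth[OF c2])
    finally show ?thesis .
  qed

  have "\<forall>j. \<exists>c. (\<forall>i. c i \<in> K) \<and> bb j = (\<Sum>i\<in>UNIV. c i *s b i)"
  proof
    fix j
    have "bb j \<in> U_set q" unfolding U_set_phi bb_def by blast
    thus "\<exists>c. (\<forall>i. c i \<in> K) \<and> bb j = (\<Sum>i\<in>UNIV. c i *s b i)" unfolding spanU by blast
  qed
  from choice[OF this] obtain cA where cA: "\<And>j i. cA j i \<in> K" "\<And>j. bb j = (\<Sum>i\<in>UNIV. cA j i *s b i)"
    by blast

  have e0: "E v (\<chi> s. if s = 0 then 1 else 0) = v $ 0" for v :: "'a^8" unfolding E_def sum_8 by simp
  have e4: "E v (\<chi> s. if s = 4 then 1 else 0) = v $ 4" for v :: "'a^8" unfolding E_def sum_8 by simp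
  have trE: "tr q (x i * X + y i * Y) = E (V q X Y) (Vz i)" for i X Y
    unfolding Vz_def dotV[OF c2 hq] by (simp add: mult.commute)
  have expX: "(\<Sum>i\<in>UNIV. tr q (x i * X + y i * Y) * xs i) = X" for X Y
  proof -
    have "(\<Sum>i\<in>UNIV. tr q (x i * X + y i * Y) * xs i)
       = (\<Sum>i\<in>UNIV. E (V q X Y) (Vz i) * E (\<chi> s. if s = 0 then 1 else 0) (Vs i))"
      unfolding trE E_e0 Vs_def V_comp ..
    also have "\<dots> = X" unfolding key e0 V_comp ..
    finally show ?thesis .
  qed
  have expY: "(\<Sum>i\<in>UNIV. tr q (x i * X + y i * Y) * ys i) = Y" for X Y
  proof -
    have "(\<Sum>i\<in>UNIV. tr q (x i * X + y i * Y) * ys i)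
       = (\<Sum>i\<in>UNIV. E (V q X Y) (Vz i) * E (\<chi> s. if s = 4 then 1 else 0) (Vs i))"
      unfolding trE E_e4 Vs_def V_comp ..
    also have "\<dots> = Y" unfolding key e4 V_comp ..
    finally show ?thesis .
  qed
  define beta where "beta j i = tr q (x i * Lx q (x j) (y j) + y i * Ly q (x j) (y j))" for j i
  have betaK: "beta j i \<in> K" for j i unfolding beta_def by (rule trK)
  have bexp: "(\<Sum>i\<in>UNIV. beta j i *s bb i) = b j" for j
  proof -
    have KK: "\<forall>i\<in>UNIV. beta j i \<in> subfield_q q" using betaK unfolding K_def by blast
    have "(\<Sum>i\<in>UNIV. beta j i *s bb i)
      = phi q (\<Sum>i\<in>UNIV. beta j i * Lx q (xs i) (ys i)) (\<Sum>i\<in>UNIV. beta j i * Ly q (xs i) (ys i))"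
      unfolding bb_def by (rule philin) (use betaK in blast)
    also have "\<dots> = phi q (Lx q (\<Sum>i\<in>UNIV. beta j i * xs i) (\<Sum>i\<in>UNIV. beta j i * ys i))
        (Ly q (\<Sum>i\<in>UNIV. beta j i * xs i) (\<Sum>i\<in>UNIV. beta j i * ys i))"
      using Lx_lin[OF c2 hq KK] Ly_lin[OF c2 hq KK] by simp
    also have "\<dots> = phi q (Lx q (Lx q (x j) (y j)) (Ly q (x j) (y j))) (Ly q (Lx q (x j) (y j)) (Ly q (x j) (y j)))"
      unfolding beta_def expX expY ..
    also have "\<dots> = b j" unfolding L_inv[OF c2 hq card] bxy ..
    finally show ?thesis .
  qed

  define A :: "'a^8^8" where "A = (\<chi> i j. cA j i)"
  define B :: "'a^8^8" where "B = (\<chi> i j. beta j i)"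
  have AB: "A ** B = mat 1"
  proof -
    have "(A ** B) $ k $ j = (if k = j then 1 else 0)" for k j
    proof -
      define e where "e k' = (\<Sum>i\<in>UNIV. cA i k' * beta j i) - (if k' = j then 1 else 0)" for k'
      have eK: "\<forall>k'. e k' \<in> K" unfolding e_def using cA(1) betaK K0 K1
        by (intro allI Kdiff Ksum Kmul) auto
      have s1: "(\<Sum>k'\<in>UNIV. (\<Sum>i\<in>UNIV. cA i k' * beta j i) *s b k') = b j"
      proof -
        have "(\<Sum>k'\<in>UNIV. (\<Sum>i\<in>UNIV. cA i k' * beta j i) *s b k')
           = (\<Sum>k'\<in>UNIV. \<Sum>i\<in>UNIV. beta j i *s (cA i k' *s b k'))"
          by (simp add: vec.scale_sum_left vector_smult_assoc mult.commute)
        also have "\<dots> = (\<Sum>i\<in>UNIV. \<Sum>k'\<in>UNIV. beta j i *s (cA i k' *s b k'))"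
          by (rule sum.swap)
        also have "\<dots> = (\<Sum>i\<in>UNIV. beta j i *s bb i)"
          unfolding cA(2) by (simp add: vec.scale_sum_right)
        also have "\<dots> = b j" by (rule bexp)
        finally show ?thesis .
      qed
      have s2: "(\<Sum>k'\<in>UNIV. (if k' = j then 1 else 0) *s b k') = b j"
        by (simp add: if_distrib[of "\<lambda>c. c *s _"] cong: if_cong)
      have "(\<Sum>k'\<in>UNIV. e k' *s b k') = 0"
        unfolding e_def by (simp add: vec.scale_left_diff_distrib sum_subtractf s1 s2)
      hence "e k = 0" using indep[OF eK] by blast
      moreover have "(A ** B) $ k $ j = (\<Sum>i\<in>UNIV. cA i k * beta j i)"
        unfolding A_def B_def matrix_matrix_mult_def by simp
      ultimately show ?thesis unfolding e_def by simp
    qed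
    thus ?thesis by (simp add: vec_eq_iff mat_def)
  qed
  hence BA: "B ** A = mat 1" using matrix_left_right_inverse by blast

  define CC where "CC = {(\<chi> j. \<Sum>l\<in>UNIV. u $ l * bb j $ l) | u :: 'a^4. True}"
  have rm: "row_mult (\<chi> i. \<Sum>k\<in>UNIV. u $ k * b i $ k) A = (\<chi> j. \<Sum>k\<in>UNIV. u $ k * bb j $ k)" for u
  proof -
    have "(\<Sum>i\<in>UNIV. (\<Sum>k\<in>UNIV. u $ k * b i $ k) * cA j i) = (\<Sum>k\<in>UNIV. u $ k * bb j $ k)" for j
    proof -
      have "(\<Sum>i\<in>UNIV. (\<Sum>k\<in>UNIV. u $ k * b i $ k) * cA j i) = (\<Sum>i\<in>UNIV. \<Sum>k\<in>UNIV. u $ k * (cA j i * b i $ k))"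
        by (simp add: sum_distrib_right sum_distrib_left mult_ac)
      also have "\<dots> = (\<Sum>k\<in>UNIV. \<Sum>i\<in>UNIV. u $ k * (cA j i * b i $ k))" by (rule sum.swap)
      also have "\<dots> = (\<Sum>k\<in>UNIV. u $ k * bb j $ k)"
        unfolding cA(2) by (simp add: sum_component sum_distrib_left)
      finally show ?thesis .
    qed
    thus ?thesis unfolding row_mult_def A_def by simp
  qed
  have img: "(\<lambda>v. row_mult v A) ` assoc_code b = CC"
  proof
    show "(\<lambda>v. row_mult v A) ` assoc_code b \<subseteq> CC" unfolding assoc_code_def CC_def using rm by auto
    show "CC \<subseteq> (\<lambda>v. row_mult v A) ` assoc_code b"
    proof
      fix w assume "w \<in> CC"
      then obtain u where w: "w = (\<chi> j. \<Sum>l\<in>UNIV. u $ l * bb j $ l)" unfolding CC_def by blast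
      have "(\<chi> i. \<Sum>k\<in>UNIV. u $ k * b i $ k) \<in> assoc_code b" unfolding assoc_code_def by blast
      moreover have "w = row_mult (\<chi> i. \<Sum>k\<in>UNIV. u $ k * b i $ k) A" unfolding w rm ..
      ultimately show "w \<in> (\<lambda>v. row_mult v A) ` assoc_code b" by blast
    qed
  qed
  have dualeq: "dual_code (assoc_code b) = CC"
  proof
    show "CC \<subseteq> dual_code (assoc_code b)"
    proof
      fix w assume "w \<in> CC"
      then obtain u where w: "w = (\<chi> j. \<Sum>l\<in>UNIV. u $ l * bb j $ l)" unfolding CC_def by blast
      show "w \<in> dual_code (assoc_code b)" unfolding dual_code_def
      proof (intro CollectI ballI)
        fix v assume "v \<in> assoc_code b"
        then obtain u' where v: "v = (\<chi> j. \<Sum>k\<in>UNIV. u' $ k * b j $ k)" unfolding assoc_code_def by blast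
        have "(\<Sum>i\<in>UNIV. w $ i * v $ i) = (\<Sum>i\<in>UNIV. \<Sum>l\<in>UNIV. \<Sum>k\<in>UNIV. (u $ l * bb i $ l) * (u' $ k * b i $ k))"
          unfolding w v by (simp add: sum_product)
        also have "\<dots> = (\<Sum>i\<in>UNIV. \<Sum>l\<in>UNIV. \<Sum>k\<in>UNIV. u $ l * u' $ k * (bb i $ l * b i $ k))"
          by (simp add: mult_ac)
        also have "\<dots> = (\<Sum>l\<in>UNIV. \<Sum>i\<in>UNIV. \<Sum>k\<in>UNIV. u $ l * u' $ k * (bb i $ l * b i $ k))"
          by (rule sum.swap)
        also have "\<dots> = (\<Sum>l\<in>UNIV. \<Sum>k\<in>UNIV. \<Sum>i\<in>UNIV. u $ l * u' $ k * (bb i $ l * b i $ k))"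
          by (rule sum.cong[OF refl], rule sum.swap)
        also have "\<dots> = (\<Sum>l\<in>UNIV. \<Sum>k\<in>UNIV. u $ l * u' $ k * (\<Sum>i\<in>UNIV. bb i $ l * b i $ k))"
          by (simp only: sum_distrib_left)
        also have "\<dots> = 0" unfolding orthsum by simp
        finally show "(\<Sum>i\<in>UNIV. w $ i * v $ i) = 0" .
      qed
    qed
  next
    show "dual_code (assoc_code b) \<subseteq> CC"
    proof
      fix w assume wd: "w \<in> dual_code (assoc_code b)"
      have wk: "(\<Sum>j\<in>UNIV. w $ j * b j $ k) = 0" for k
      proof -
        have "(\<chi> j. \<Sum>k'\<in>UNIV. axis k 1 $ k' * b j $ k') \<in> assoc_code b"
          unfolding assoc_code_def by blast
        moreover have "(\<chi> j. \<Sum>k'\<in>UNIV. axis k (1::'a) $ k' * b j $ k') = (\<chi> j. b j $ k)"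
        proof -
          have ii: "(if P then 1 else 0) * (z::'a) = (if P then z else 0)" for P z by simp
          show ?thesis by (simp add: axis_def ii)
        qed
        ultimately have "(\<chi> j. b j $ k) \<in> assoc_code b" by simp
        thus ?thesis using wd unfolding dual_code_def by auto
      qed
      define m :: "'a^8" where "m = (\<chi> s. \<Sum>j\<in>UNIV. w $ j * Vz j $ s)"
      have Em: "E c m = (\<Sum>j\<in>UNIV. w $ j * E c (Vz j))" for c
      proof -
        have "E c m = (\<Sum>s\<in>UNIV. \<Sum>j\<in>UNIV. c $ s * (w $ j * Vz j $ s))"
          unfolding E_def m_def by (simp add: sum_distrib_left)
        also have "\<dots> = (\<Sum>j\<in>UNIV. \<Sum>s\<in>UNIV. c $ s * (w $ j * Vz j $ s))" by (rule sum.swap)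
        also have "\<dots> = (\<Sum>j\<in>UNIV. w $ j * E c (Vz j))"
          unfolding E_def by (simp add: sum_distrib_left algebra_simps)
        finally show ?thesis .
      qed
      have mc: "E (cc k) m = 0" for k unfolding Em bE[symmetric] by (rule wk)
      have wi: "E m (Vs i) = w $ i" for i
      proof -
        have "E m (Vs i) = (\<Sum>s\<in>UNIV. \<Sum>j\<in>UNIV. w $ j * (Vs i $ s * Vz j $ s))"
          unfolding E_def m_def by (simp add: sum_distrib_right sum_distrib_left mult_ac)
        also have "\<dots> = (\<Sum>j\<in>UNIV. \<Sum>s\<in>UNIV. w $ j * (Vs i $ s * Vz j $ s))" by (rule sum.swap)
        also have "\<dots> = (\<Sum>j\<in>UNIV. w $ j * E (Vs i) (Vz j))"
          unfolding E_def by (simp add: sum_distrib_left)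
        also have "\<dots> = w $ i" unfolding dot1 by (simp add: if_distrib cong: if_cong)
        finally show ?thesis .
      qed
      define u :: "'a^4" where "u = vector [m$6 + m$7, m$3 + m$5 + m$7, m$3 + m$6, m$5 + m$7]"
      have us: "(\<Sum>l\<in>UNIV. u $ l * dd l $ s) = m $ s" for s
        unfolding u_def by (rule solve[OF c2 mc])
      have "(\<Sum>l\<in>UNIV. u $ l * bb i $ l) = w $ i" for i
      proof -
        have "(\<Sum>l\<in>UNIV. u $ l * bb i $ l) = (\<Sum>l\<in>UNIV. \<Sum>s\<in>UNIV. u $ l * dd l $ s * Vs i $ s)"
          unfolding bbE E_def by (simp add: sum_distrib_left algebra_simps)
        also have "\<dots> = (\<Sum>s\<in>UNIV. \<Sum>l\<in>UNIV. u $ l * dd l $ s * Vs i $ s)" by (rule sum.swap)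
        also have "\<dots> = (\<Sum>s\<in>UNIV. m $ s * Vs i $ s)"
          unfolding us[symmetric] by (simp add: sum_distrib_right)
        also have "\<dots> = w $ i" using wi unfolding E_def .
        finally show ?thesis .
      qed
      hence "w = (\<chi> j. \<Sum>l\<in>UNIV. u $ l * bb j $ l)" by (simp add: vec_eq_iff)
      thus "w \<in> CC" unfolding CC_def by blast
    qed
  qed

  show ?thesis unfolding codes_equiv_def
  proof (intro exI conjI allI)
    show "A $ i $ j \<in> subfield_q q" for i j unfolding A_def using cA(1) K_def by simp
    show "B $ i $ j \<in> subfield_q q" for i j unfolding B_def using betaK K_def by simp
    show "A ** B = mat 1" by (rule AB)
    show "B ** A = mat 1" by (rule BA)
    show "dual_code (assoc_code b) = (\<lambda>v. row_mult v A) ` assoc_code b" using img dualeq by simp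
  qed
qed

end
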